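(* Let $n$ be a positive integer, $p_1,\dots,p_n$ distinct primes, and $(X,r)$ an indecomposable multipermutation solution of the YBE with $|X|=p_1\cdots p_n$. Then both $(X,r)$ and the solution $(\mathcal G(X,r),r_{\mathcal G})$ associated to the left brace $\mathcal G(X,r)$ have multipermutation level at most $n$.
   Context: A solution of the Yang–Baxter equation (YBE) is a pair $(X,r)$, where $X$ is a non-empty set and $r\colon X\times X\to X\times X$, written $r(x,y)=(\sigma_x(y),\gamma_y(x))$, satisfies: $r^2=\mathrm{id}$; all $\sigma_x,\gamma_y$ are bijections of $X$; and $r_{12}r_{23}r_{12}=r_{23}r_{12}r_{23}$ on $X^3$, where $r_{12}=r\times\mathrm{id}_X$, $r_{23}=\mathrm{id}_X\times r$. $\mathcal G(X,r)=\langle\sigma_x:x\in X\rangle\le\mathrm{Sym}_X$; $(X,r)$ is indecomposable if $\mathcal G(X,r)$ is transitive on $X$. Retract: $x\sim y\iff\sigma_x=\sigma_y$, inducing a solution $\mathrm{Ret}(X,r)$ on $X/{\sim}$; $\mathrm{Ret}^k$ is the $k$-fold iterate; $(X,r)$ is multipermutation if $|\mathrm{Ret}^k(X,r)|=1$ for some $k\ge1$, the least such $k$ being its multipermutation level. A left brace is a set $B$ with operations $+$ and $\circ$ (written $ab$) such that $(B,+)$ is an abelian group, $(B,\circ)$ is a group and $a(b+c)+a=ab+ac$; $\lambda_a(b)=-a+ab$. The solution associated to $B$ is $(B,r_B)$ with $r_B(a,b)=(\lambda_a(b),\lambda^{-1}_{\lambda_a(b)}(a))$. Brace structure on $\mathcal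 G(X,r)$: the structure group $G(X,r)=\langle x\in X\mid xy=\sigma_x(y)\gamma_y(x)\rangle$ is a left brace with additive group free abelian on $X$ and $\lambda_x(y)=\sigma_x(y)$; $x\mapsto\sigma_x$ extends to a group epimorphism $\phi\colon G(X,r)\to\mathcal G(X,r)$ with kernel $\{a: ab=a+b\ \forall b\}$, and $\mathcal G(X,r)$ carries the unique left brace structure making $\phi$ a brace homomorphism. *)

theory Defs
  imports "HOL-Algebra.Algebra" "HOL-Computational_Algebra.Primes"
begin

definition sig :: "('a \<times> 'a \<Rightarrow> 'a \<times> 'a) \<Rightarrow> 'a \<Rightarrow> 'a \<Rightarrow> 'a" where
  "sig r x y = fst (r (x, y))"

definition gam :: "('a \<times> 'a \<Rightarrow> 'a \<times> 'a) \<Rightarrow> 'a \<Rightarrow> 'a \<Rightarrow> 'a" where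
  "gam r y x = snd (r (x, y))"

definition r12 :: "('a \<times> 'a \<Rightarrow> 'a \<times> 'a) \<Rightarrow> 'a \<times> 'a \<times> 'a \<Rightarrow> 'a \<times> 'a \<times> 'a" where
  "r12 r t = (case t of (x, y, z) \<Rightarrow> (fst (r (x, y)), snd (r (x, y)), z))"

definition r23 :: "('a \<times> 'a \<Rightarrow> 'a \<times> 'a) \<Rightarrow> 'a \<times> 'a \<times> 'a \<Rightarrow> 'a \<times> 'a \<times> 'a" where
  "r23 r t = (case t of (x, y, z) \<Rightarrow> (x, fst (r (y, z)), snd (r (y, z))))"

definition solution :: "'a set \<Rightarrow> ('a \<times> 'a \<Rightarrow> 'a \<times> 'a) \<Rightarrow> bool" where
  "solution S r \<longleftrightarrow>
     S \<noteq> {} \<and>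
     (\<forall>x\<in>S. \<forall>y\<in>S. fst (r (x, y)) \<in> S \<and> snd (r (x, y)) \<in> S) \<and>
     (\<forall>x\<in>S. \<forall>y\<in>S. r (r (x, y)) = (x, y)) \<and>
     (\<forall>x\<in>S. bij_betw (sig r x) S S) \<and>
     (\<forall>y\<in>S. bij_betw (gam r y) S S) \<and>
     (\<forall>x\<in>S. \<forall>y\<in>S. \<forall>z\<in>S.
        r12 r (r23 r (r12 r (x, y, z))) = r23 r (r12 r (r23 r (x, y, z))))"

text \<open>The permutation group G(S,r) = <sigma_x : x in S> inside Sym_X
  (permutations represented as extensional bijections of S, HOL-Algebra's BijGroup).\<close>
definition permG :: "'a set \<Rightarrow> ('a \<times> 'a \<Rightarrow> 'a \<times> 'a) \<Rightarrow> ('a \<Rightarrow> 'a) set" where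
  "permG S r = generate (BijGroup S) {restrict (sig r x) S | x. x \<in> S}"

definition indecomposable :: "'a set \<Rightarrow> ('a \<times> 'a \<Rightarrow> 'a \<times> 'a) \<Rightarrow> bool" where
  "indecomposable S r \<longleftrightarrow> (\<forall>x\<in>S. \<forall>y\<in>S. \<exists>g\<in>permG S r. g x = y)"

text \<open>Iterated retraction: Ret^k(S,r) is (canonically isomorphic to) S modulo the
  relation ret_rel S r k, where ret_rel 0 is equality and x ~_{k+1} y iff the
  permutations sigma_[x], sigma_[y] of Ret^k(S,r) = S/~_k coincide, i.e.
  sigma_x(z) ~_k sigma_y(z) for all z.\<close>
fun ret_rel :: "'a set \<Rightarrow> ('a \<times> 'a \<Rightarrow> 'a \<times> 'a) \<Rightarrow> nat \<Rightarrow> ('a \<times> 'a) set" where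
  "ret_rel S r 0 = {(x, y). x \<in> S \<and> y \<in> S \<and> x = y}"
| "ret_rel S r (Suc k) = {(x, y). x \<in> S \<and> y \<in> S \<and>
      (\<forall>z\<in>S. (sig r x z, sig r y z) \<in> ret_rel S r k)}"

definition multipermutation :: "'a set \<Rightarrow> ('a \<times> 'a \<Rightarrow> 'a \<times> 'a) \<Rightarrow> bool" where
  "multipermutation S r \<longleftrightarrow> (\<exists>k\<ge>1. card (S // ret_rel S r k) = 1)"

definition mp_level :: "'a set \<Rightarrow> ('a \<times> 'a \<Rightarrow> 'a \<times> 'a) \<Rightarrow> nat" where
  "mp_level S r = (LEAST k. k \<ge> 1 \<and> card (S // ret_rel S r k) = 1)"

definition addG :: "'b set \<Rightarrow> ('b \<Rightarrow> 'b \<Rightarrow> 'b) \<Rightarrow> 'b monoid" where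
  "addG B pl = \<lparr>carrier = B, monoid.mult = pl, one = (THE z. z \<in> B \<and> (\<forall>b\<in>B. pl z b = b))\<rparr>"

definition mulG :: "'b set \<Rightarrow> ('b \<Rightarrow> 'b \<Rightarrow> 'b) \<Rightarrow> 'b monoid" where
  "mulG B mul = \<lparr>carrier = B, monoid.mult = mul, one = (THE e. e \<in> B \<and> (\<forall>b\<in>B. mul e b = b))\<rparr>"

definition left_brace :: "'b set \<Rightarrow> ('b \<Rightarrow> 'b \<Rightarrow> 'b) \<Rightarrow> ('b \<Rightarrow> 'b \<Rightarrow> 'b) \<Rightarrow> bool" where
  "left_brace B pl mul \<longleftrightarrow>
     comm_group (addG B pl) \<and> group (mulG B mul) \<and>
     (\<forall>a\<in>B. \<forall>b\<in>B. \<forall>c\<in>B. pl (mul a (pl b c)) a = pl (mul a b) (mul a c))"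

definition blam :: "'b set \<Rightarrow> ('b \<Rightarrow> 'b \<Rightarrow> 'b) \<Rightarrow> ('b \<Rightarrow> 'b \<Rightarrow> 'b) \<Rightarrow> 'b \<Rightarrow> 'b \<Rightarrow> 'b" where
  "blam B pl mul a b = pl (inv\<^bsub>addG B pl\<^esub> a) (mul a b)"

definition brace_sol :: "'b set \<Rightarrow> ('b \<Rightarrow> 'b \<Rightarrow> 'b) \<Rightarrow> ('b \<Rightarrow> 'b \<Rightarrow> 'b) \<Rightarrow> 'b \<times> 'b \<Rightarrow> 'b \<times> 'b" where
  "brace_sol B pl mul p = (case p of (a, b) \<Rightarrow>
     (blam B pl mul a b,
      the_inv_into B (blam B pl mul (blam B pl mul a b)) a))"

text \<open>Brace structures on G(S,r) (multiplication = composition of permutations)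
  that make phi : G(S,r) -> G(S,r), x |-> sigma_x, a brace homomorphism.
  Since phi(lambda_a(y)) = sigma_{phi(a)(y)} in the structure group brace and the
  sigma_y generate, this amounts to lambda_g(sigma_y) = sigma_{g(y)}; this
  determines the addition uniquely.\<close>
definition induced_brace_add :: "'a set \<Rightarrow> ('a \<times> 'a \<Rightarrow> 'a \<times> 'a) \<Rightarrow> (('a \<Rightarrow> 'a) \<Rightarrow> ('a \<Rightarrow> 'a) \<Rightarrow> ('a \<Rightarrow> 'a)) \<Rightarrow> bool" where
  "induced_brace_add S r pl \<longleftrightarrow>
     left_brace (permG S r) pl (monoid.mult (BijGroup S)) \<and>
     (\<forall>g\<in>permG S r. \<forall>y\<in>S.
        blam (permG S r) pl (monoid.mult (BijGroup S)) g (restrict (sig r y) S)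
          = restrict (sig r (g y)) S)"

end

theory Submission
  imports Defs
begin
lemma fin_inv_pres:
  assumes "finite R" "R \<subseteq> S \<times> S" "\<And>x y. (x,y) \<in> R \<Longrightarrow> (f x, f y) \<in> R"
    "inj_on f S" "\<And>x. x \<in> S \<Longrightarrow> g x \<in> S \<and> f (g x) = x" "(x,y) \<in> R"
  shows "(g x, g y) \<in> R"
proof -
  let ?h = "map_prod f f"
  have inj: "inj_on ?h R" using assms(2,4) unfolding inj_on_def
    by (smt (verit, best) map_prod_simp mem_Sigma_iff prod.inject subset_iff surj_pair)
  have "?h ` R \<subseteq> R" using assms(3) by auto
  then have eq: "?h ` R = R" using endo_inj_surj[OF assms(1) _ inj] by auto
  have "(x,y) \<in> ?h ` R" using eq assms(6) by simp
  then obtain q where q: "q \<in> R" "(x,y) = ?h q" by (rule imageE) simp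
  obtain a b where "q = (a,b)" by (cases q)
  then have ab: "(a,b) \<in> R" "x = f a" "y = f b" using q by auto
  have aS: "a \<in> S" "b \<in> S" using ab assms(2) by auto
  have xyS: "x \<in> S" "y \<in> S" using assms(2,6) by auto
  have "g x \<in> S" "f (g x) = f a" using assms(5)[OF xyS(1)] ab by auto
  then have "g x = a" using assms(4) aS inj_on_def by metis
  moreover have "g y \<in> S" "f (g y) = f b" using assms(5)[OF xyS(2)] ab by auto
  then have "g y = b" using assms(4) aS inj_on_def by metis
  ultimately show ?thesis using ab by simp
qed

context
  fixes S :: "'a set" and r
  assumes sol: "solution S r" and finS: "finite S"
begin

abbreviation "sg \<equiv> sig r"
definition "sgi x = inv_into S (sig r x)"

lemma sg_bij: "x \<in> S \<Longrightarrow> bij_betw (sg x) S S"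
  using sol unfolding solution_def by auto

lemma sg_in: "x \<in> S \<Longrightarrow> y \<in> S \<Longrightarrow> sg x y \<in> S"
  using sol unfolding solution_def sig_def by auto

lemma sgi_in: "x \<in> S \<Longrightarrow> y \<in> S \<Longrightarrow> sgi x y \<in> S"
  unfolding sgi_def using sg_bij bij_betw_inv_into bij_betwE by metis

lemma sgi_sg: "x \<in> S \<Longrightarrow> y \<in> S \<Longrightarrow> sgi x (sg x y) = y"
  unfolding sgi_def using sg_bij bij_betw_inv_into_left by metis

lemma sg_sgi: "x \<in> S \<Longrightarrow> y \<in> S \<Longrightarrow> sg x (sgi x y) = y"
  unfolding sgi_def using sg_bij bij_betw_inv_into_right by metis

lemma sg_inj: "x \<in> S \<Longrightarrow> inj_on (sg x) S"
  using sg_bij bij_betw_def by metis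

lemma sgi_inj: "x \<in> S \<Longrightarrow> inj_on (sgi x) S"
  by (smt (verit, ccfv_SIG) inj_onI sg_sgi)

lemma ybe1: assumes "x \<in> S" "y \<in> S" "z \<in> S"
  shows "sg x (sg y z) = sg (sg x y) (sg (gam r y x) z)"
proof -
  have "r12 r (r23 r (r12 r (x, y, z))) = r23 r (r12 r (r23 r (x, y, z)))"
    using sol assms unfolding solution_def by blast
  then have "fst (r12 r (r23 r (r12 r (x, y, z)))) = fst (r23 r (r12 r (r23 r (x, y, z))))"
    by simp
  then show ?thesis unfolding r12_def r23_def sig_def gam_def
    by (simp split: prod.splits)
qed

lemma invol1: assumes "x \<in> S" "y \<in> S"
  shows "sg (sg x y) (gam r y x) = x" "gam r y x \<in> S"
proof -
  have "r (r (x, y)) = (x, y)" using sol assms unfolding solution_def by blast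
  then show "sg (sg x y) (gam r y x) = x" unfolding sig_def gam_def by simp
  show "gam r y x \<in> S" using sol assms unfolding solution_def gam_def by blast
qed

lemma gam_eq: assumes "x \<in> S" "y \<in> S" shows "gam r y x = sgi (sg x y) x"
  using invol1[OF assms] sgi_sg sg_in assms by metis

lemma star: assumes "a \<in> S" "b \<in> S" "u \<in> S"
  shows "sg a (sg (sgi a b) u) = sg b (sg (sgi b a) u)"
proof -
  have c: "sgi a b \<in> S" using assms sgi_in by auto
  have "sg a (sg (sgi a b) u) = sg (sg a (sgi a b)) (sg (gam r (sgi a b) a) u)"
    using ybe1[OF assms(1) c assms(3)] .
  also have "\<dots> = sg b (sg (sgi b a) u)"
    using gam_eq[OF assms(1) c] sg_sgi assms by simp
  finally show ?thesis .
qed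

lemma cyc: assumes "w \<in> S" "x \<in> S" "t \<in> S"
  shows "sgi (sgi w x) (sgi w t) = sgi (sgi x w) (sgi x t)"
proof -
  define c where "c = sgi w x"
  define d where "d = sgi x w"
  define u where "u = sgi c (sgi w t)"
  have cS: "c \<in> S" "d \<in> S" using assms sgi_in c_def d_def by auto
  have uS: "u \<in> S" using u_def cS assms sgi_in by auto
  have "sg w (sg c u) = t" using u_def cS assms sg_sgi sgi_in by simp
  then have "sg x (sg d u) = t" using star[OF assms(1,2) uS] c_def d_def by simp
  then have "sg d u = sgi x t" using sgi_sg assms sg_in cS uS by metis
  then have "u = sgi d (sgi x t)" using sgi_sg cS uS by metis
  then show ?thesis using u_def c_def d_def by simp
qed

abbreviation "R k \<equiv> ret_rel S r k"

lemma R_sub: "R k \<subseteq> S \<times> S"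
  by (cases k) auto

lemma R_refl: "x \<in> S \<Longrightarrow> (x, x) \<in> R k"
  by (induction k arbitrary: x) (auto simp: sg_in)

lemma R_sym: "(x, y) \<in> R k \<Longrightarrow> (y, x) \<in> R k"
  by (induction k arbitrary: x y) auto

lemma R_trans: "(x, y) \<in> R k \<Longrightarrow> (y, z) \<in> R k \<Longrightarrow> (x, z) \<in> R k"
  proof (induction k arbitrary: x y z)
  case 0 then show ?case by auto
next
  case (Suc k)
  then have "\<forall>w\<in>S. (sg x w, sg z w) \<in> R k" by simp blast
  then show ?case using Suc.prems by simp
qed

lemma R_mono: "(x, y) \<in> R k \<Longrightarrow> (x, y) \<in> R (Suc k)"
  by (induction k arbitrary: x y) (auto simp: sg_in R_refl)


definition "InvR k \<longleftrightarrow> (\<forall>w\<in>S. \<forall>x y. (x,y)\<in>R k \<longrightarrow> (sgi w x, sgi w y)\<in>R k \<and> (sg w x, sg w y) \<in> R k)"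
definition "CR k \<longleftrightarrow> (\<forall>a b d. (a,b) \<in> R k \<longrightarrow> d \<in> S \<longrightarrow> (sgi a d, sgi b d) \<in> R k)"

lemma R'_of: assumes I: "InvR k" and xy: "(x,y) \<in> R (Suc k)" and t: "t \<in> S"
  shows "(sgi x t, sgi y t) \<in> R k"
proof -
  have xS: "x \<in> S" "y \<in> S" using xy by auto
  define z where "z = sgi y t"
  have zS: "z \<in> S" using z_def xS t sgi_in by auto
  have "(sg x z, sg y z) \<in> R k" using xy zS by auto
  moreover have "sg y z = t" using z_def xS t sg_sgi by auto
  ultimately have "(sgi x (sg x z), sgi x t) \<in> R k" using I xS unfolding InvR_def by metis
  then have "(z, sgi x t) \<in> R k" using sgi_sg xS zS by simp
  then show ?thesis using R_sym z_def by auto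
qed

lemma R_of': assumes I: "InvR k" and ab: "a \<in> S" "b \<in> S"
  and h: "\<And>t. t \<in> S \<Longrightarrow> (sgi a t, sgi b t) \<in> R k"
  shows "(a, b) \<in> R (Suc k)"
proof -
  have "(sg a z, sg b z) \<in> R k" if z: "z \<in> S" for z
  proof -
    have "(sgi a (sg b z), sgi b (sg b z)) \<in> R k" using h sg_in ab z by auto
    then have "(sgi a (sg b z), z) \<in> R k" using sgi_sg ab z by simp
    then have "(sg a (sgi a (sg b z)), sg a z) \<in> R k" using I ab unfolding InvR_def by metis
    then have "(sg b z, sg a z) \<in> R k" using sg_sgi ab z sg_in by simp
    then show ?thesis using R_sym by auto
  qed
  then show ?thesis using ab by auto
qed

lemma InvC: "InvR k \<and> CR k"
proof (induction k)
  case 0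
  show ?case unfolding InvR_def CR_def by (auto simp: sgi_in sg_in)
next
  case (Suc k)
  then have I: "InvR k" and C: "CR k" by auto
  have comb: "(sgi a c, sgi b d) \<in> R k" if "(a,b) \<in> R k" "(c,d) \<in> R k" for a b c d
  proof -
    have "(sgi a c, sgi a d) \<in> R k" using I that R_sub unfolding InvR_def by blast
    moreover have "(sgi a d, sgi b d) \<in> R k" using C that R_sub unfolding CR_def by blast
    ultimately show ?thesis using R_trans by blast
  qed
  have inv1: "(sgi w x, sgi w y) \<in> R (Suc k)" if w: "w \<in> S" and xy: "(x,y) \<in> R (Suc k)" for w x y
  proof -
    have xS: "x \<in> S" "y \<in> S" using xy by auto
    have "(sgi (sgi w x) t, sgi (sgi w y) t) \<in> R k" if t: "t \<in> S" for t
    proof -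
      define s where "s = sg w t"
      have sS: "s \<in> S" using s_def w t sg_in by auto
      have tt: "t = sgi w s" using s_def sgi_sg w t by simp
      have e1: "sgi (sgi w x) t = sgi (sgi x w) (sgi x s)" using cyc[OF w xS(1) sS] tt by simp
      have e2: "sgi (sgi w y) t = sgi (sgi y w) (sgi y s)" using cyc[OF w xS(2) sS] tt by simp
      have "(sgi x w, sgi y w) \<in> R k" using R'_of[OF I xy w] .
      moreover have "(sgi x s, sgi y s) \<in> R k" using R'_of[OF I xy sS] .
      ultimately show ?thesis using comb e1 e2 by simp
    qed
    then show ?thesis using R_of'[OF I] xS w sgi_in by blast
  qed
  have inv2: "(sg w x, sg w y) \<in> R (Suc k)" if w: "w \<in> S" and xy: "(x,y) \<in> R (Suc k)" for w x y
  proof (rule fin_inv_pres[where R="R (Suc k)" and S=S and f="sgi w" and g="sg w"])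
    show "finite (R (Suc k))" using finite_subset[OF R_sub] finS by blast
    show "R (Suc k) \<subseteq> S \<times> S" by (rule R_sub)
    show "\<And>x y. (x, y) \<in> R (Suc k) \<Longrightarrow> (sgi w x, sgi w y) \<in> R (Suc k)" using inv1 w by blast
    show "inj_on (sgi w) S" using sgi_inj w by blast
    show "\<And>x. x \<in> S \<Longrightarrow> sg w x \<in> S \<and> sgi w (sg w x) = x" using sg_in sgi_sg w by blast
    show "(x, y) \<in> R (Suc k)" by (rule xy)
  qed
  have "InvR (Suc k)" unfolding InvR_def using inv1 inv2 by blast
  moreover have "CR (Suc k)" unfolding CR_def
  proof (intro allI impI)
    fix a b d assume ab: "(a,b) \<in> R (Suc k)" and d: "d \<in> S"
    show "(sgi a d, sgi b d) \<in> R (Suc k)" using R'_of[OF I ab d] R_mono by blast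
  qed
  ultimately show ?case by blast
qed

lemma R_inv_sgi: "w \<in> S \<Longrightarrow> (x,y) \<in> R k \<Longrightarrow> (sgi w x, sgi w y) \<in> R k"
  using InvC unfolding InvR_def by blast
lemma R_inv_sg: "w \<in> S \<Longrightarrow> (x,y) \<in> R k \<Longrightarrow> (sg w x, sg w y) \<in> R k"
  using InvC unfolding InvR_def by blast

end

lemma sqfree_prod:
  fixes p :: "nat \<Rightarrow> nat"
  assumes pr: "\<forall>i\<in>{1..n}. Factorial_Ring.prime (p i)" and inj: "inj_on p {1..n}" and i: "i \<in> {1..n}"
  shows "\<not> (p i * p i) dvd (\<Prod>j=1..n. p j)"
proof
  assume h: "(p i * p i) dvd (\<Prod>j=1..n. p j)"
  have "(\<Prod>j=1..n. p j) = p i * (\<Prod>j\<in>{1..n}-{i}. p j)"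
    using i by (simp add: prod.remove)
  then have "p i dvd (\<Prod>j\<in>{1..n}-{i}. p j)"
  proof -
    have "p i > 0" using pr i prime_gt_0_nat by blast
    then show ?thesis using h \<open>(\<Prod>j=1..n. p j) = p i * (\<Prod>j\<in>{1..n}-{i}. p j)\<close>
      using nat_mult_dvd_cancel1 by metis
  qed
  then have "\<exists>j\<in>{1..n}-{i}. p i dvd p j"
    using prime_dvd_prod_iff[of "{1..n}-{i}" "p i" p] pr i by blast
  then obtain j where j: "j \<in> {1..n}-{i}" "p i dvd p j" by blast
  then have "p i = p j" using primes_dvd_imp_eq[of "p i" "p j"] pr i by auto
  then have "i = j" using inj_onD[OF inj] i j by blast
  then show False using j by blast
qed

lemma prime_end:
  fixes p :: "nat \<Rightarrow> nat"
  assumes pr: "\<forall>i\<in>{1..n}. Factorial_Ring.prime (p i)" and c: "c dvd (\<Prod>j=1..n. p j)" and c1: "c \<noteq> 1"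
  shows "\<exists>i\<in>{1..n}. p i dvd c"
proof -
  obtain q where q: "Factorial_Ring.prime q" "q dvd c" using prime_factor_nat c1 by blast
  then have "q dvd (\<Prod>j=1..n. p j)" using c dvd_trans by blast
  then obtain i where i: "i \<in> {1..n}" "q dvd p i" using prime_dvd_prod_iff[of "{1..n}" q p] q by auto
  then have "q = p i" using primes_dvd_imp_eq[of q "p i"] pr q by auto
  then show ?thesis using i q by auto
qed

lemma prime_step:
  fixes p :: "nat \<Rightarrow> nat"
  assumes pr: "\<forall>i\<in>{1..n}. Factorial_Ring.prime (p i)" and inj: "inj_on p {1..n}"
    and c: "c dvd (\<Prod>j=1..n. p j)" and d: "d dvd c" and ne: "d \<noteq> c"
  shows "card {i\<in>{1..n}. p i dvd d} < card {i\<in>{1..n}. p i dvd c}"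
proof -
  obtain j where cj: "c = d * j" using d by blast
  have j1: "j \<noteq> 1" using cj ne by auto
  have "j dvd c" using cj by simp
  then have "j dvd (\<Prod>j=1..n. p j)" using c dvd_trans by blast
  then obtain i where i: "i \<in> {1..n}" "p i dvd j" using prime_end[OF pr _ j1] by blast
  have "p i dvd c" using i cj by simp
  moreover have "\<not> p i dvd d"
  proof
    assume "p i dvd d"
    then have "p i * p i dvd c" using cj i mult_dvd_mono by blast
    then show False using sqfree_prod[OF pr inj i(1)] c dvd_trans by blast
  qed
  ultimately have "{i\<in>{1..n}. p i dvd d} \<subset> {i\<in>{1..n}. p i dvd c}"
    using i d dvd_trans by blast
  then show ?thesis by (intro psubset_card_mono) auto
qed

inductive_set pw :: "'a set \<Rightarrow> ('a \<times> 'a \<Rightarrow> 'a \<times> 'a) \<Rightarrow> ('a \<Rightarrow> 'a) set" for S r where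
  pw_one: "\<one>\<^bsub>BijGroup S\<^esub> \<in> pw S r"
| pw_step: "c \<in> pw S r \<Longrightarrow> v \<in> S \<Longrightarrow> c \<otimes>\<^bsub>BijGroup S\<^esub> restrict (sig r v) S \<in> pw S r"

lemma mult_eval: "f \<in> carrier (BijGroup S) \<Longrightarrow> g \<in> carrier (BijGroup S) \<Longrightarrow> x \<in> S \<Longrightarrow>
   (f \<otimes>\<^bsub>BijGroup S\<^esub> g) x = f (g x)"
  by (simp add: BijGroup_def compose_def)

lemma one_eval: "x \<in> S \<Longrightarrow> \<one>\<^bsub>BijGroup S\<^esub> x = x"
  by (simp add: BijGroup_def)

lemma Bij_in: "f \<in> carrier (BijGroup S) \<Longrightarrow> x \<in> S \<Longrightarrow> f x \<in> S"
  by (auto simp: BijGroup_def Bij_def bij_betw_def)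

lemma Bij_inj: "f \<in> carrier (BijGroup S) \<Longrightarrow> inj_on f S"
  by (auto simp: BijGroup_def Bij_def bij_betw_def)

lemma Bij_ext: "f \<in> carrier (BijGroup S) \<Longrightarrow> f \<in> extensional S"
  by (auto simp: BijGroup_def Bij_def)

lemma finite_BijG: "finite S \<Longrightarrow> finite (carrier (BijGroup S))"
proof -
  assume f: "finite S"
  have "carrier (BijGroup S) \<subseteq> PiE S (\<lambda>_. S)"
    by (auto simp: BijGroup_def Bij_def bij_betw_def PiE_def)
  moreover have "finite (PiE S (\<lambda>_. S))" using f by (simp add: finite_PiE)
  ultimately show ?thesis using finite_subset by blast
qed

lemma group_inv_pow:
  assumes "group G" "finite (carrier G)" "x \<in> carrier G"
  shows "inv\<^bsub>G\<^esub> x = x [^]\<^bsub>G\<^esub> (order G - 1)"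
proof -
  interpret group G by fact
  have "carrier G \<noteq> {}" using one_closed by blast
  then have o: "order G \<ge> 1" using assms(2) unfolding order_def
    by (simp add: Suc_leI card_gt_0_iff)
  have "x [^]\<^bsub>G\<^esub> (order G - 1) \<otimes>\<^bsub>G\<^esub> x = x [^]\<^bsub>G\<^esub> (Suc (order G - 1))" using nat_pow_Suc by simp
  also have "\<dots> = x [^]\<^bsub>G\<^esub> order G" using o by simp
  also have "\<dots> = \<one>\<^bsub>G\<^esub>" using pow_order_eq_1 assms(3) by blast
  finally show ?thesis using inv_equality assms(3) by simp
qed

lemma BG_monoid: "monoid (BijGroup S)"
  using group.is_monoid[OF group_BijGroup] .

context
  fixes S :: "'a set" and r
  assumes sol: "solution S r" and finS: "finite S"
begin

lemma sgr_Bij: "v \<in> S \<Longrightarrow> restrict (sig r v) S \<in> carrier (BijGroup S)"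
  using sg_bij[OF sol finS, of v]
  by (simp add: BijGroup_def Bij_def bij_betw_cong[of S "restrict (sig r v) S" "sig r v"])

lemma pw_carrier: "c \<in> pw S r \<Longrightarrow> c \<in> carrier (BijGroup S)"
proof (induction rule: pw.induct)
  case pw_one then show ?case using monoid.one_closed[OF BG_monoid] by blast
next
  case (pw_step c v) then show ?case using monoid.m_closed[OF BG_monoid] sgr_Bij by blast
qed

lemma pw_mult: "d \<in> pw S r \<Longrightarrow> c \<in> pw S r \<Longrightarrow> c \<otimes>\<^bsub>BijGroup S\<^esub> d \<in> pw S r"
proof (induction rule: pw.induct)
  case pw_one then show ?case using monoid.r_one[OF BG_monoid] pw_carrier by metis
next
  case (pw_step d v)
  have "c \<otimes>\<^bsub>BijGroup S\<^esub> (d \<otimes>\<^bsub>BijGroup S\<^esub> restrict (sig r v) S)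
      = (c \<otimes>\<^bsub>BijGroup S\<^esub> d) \<otimes>\<^bsub>BijGroup S\<^esub> restrict (sig r v) S"
    using monoid.m_assoc[OF BG_monoid] pw_carrier sgr_Bij pw_step by metis
  then show ?case using pw.pw_step pw_step by metis
qed

lemma pw_pow: "x \<in> pw S r \<Longrightarrow> x [^]\<^bsub>BijGroup S\<^esub> (m::nat) \<in> pw S r"
proof (induction m)
  case 0 then show ?case using pw_one by simp
next
  case (Suc m) then show ?case using pw_mult by (simp add: nat_pow_Suc)
qed

lemma pw_inv: "x \<in> pw S r \<Longrightarrow> inv\<^bsub>BijGroup S\<^esub> x \<in> pw S r"
  using group_inv_pow[OF group_BijGroup finite_BijG[OF finS]] pw_carrier pw_pow by metis

lemma permG_pw: "permG S r \<subseteq> pw S r"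
proof
  fix g assume "g \<in> permG S r"
  then show "g \<in> pw S r" unfolding permG_def
  proof (induction rule: generate.induct)
    case one then show ?case by (rule pw_one)
  next
    case (incl h)
    then obtain v where v: "v \<in> S" "h = restrict (sig r v) S" by blast
    then show ?case using pw_step[OF pw_one v(1)] monoid.l_one[OF BG_monoid] sgr_Bij by metis
  next
    case (inv h)
    then obtain v where v: "v \<in> S" "h = restrict (sig r v) S" by blast
    then have "h \<in> pw S r" using pw_step[OF pw_one v(1)] monoid.l_one[OF BG_monoid] sgr_Bij by metis
    then show ?case using pw_inv by blast
  next
    case (eng h1 h2) then show ?case using pw_mult by blast
  qed
qed

lemma permG_carrier: "g \<in> permG S r \<Longrightarrow> g \<in> carrier (BijGroup S)"
  using permG_pw pw_carrier by blast

lemma pw_pres: "g \<in> pw S r \<Longrightarrow> (x,y) \<in> ret_rel S r k \<Longrightarrow> (g x, g y) \<in> ret_rel S r k"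
proof (induction arbitrary: x y rule: pw.induct)
  case pw_one
  then have "x \<in> S" "y \<in> S" using R_sub[OF sol finS] by blast+
  then show ?case using pw_one one_eval by metis
next
  case (pw_step c v)
  have xy: "x \<in> S" "y \<in> S" using pw_step R_sub[OF sol finS] by blast+
  have "(sig r v x, sig r v y) \<in> ret_rel S r k" using R_inv_sg[OF sol finS] pw_step by blast
  then have "(c (sig r v x), c (sig r v y)) \<in> ret_rel S r k" using pw_step by blast
  then show ?case using mult_eval[OF pw_carrier[OF pw_step(1)] sgr_Bij[OF pw_step(2)]] xy by simp
qed

lemma permG_pres: "g \<in> permG S r \<Longrightarrow> (x,y) \<in> ret_rel S r k \<Longrightarrow> (g x, g y) \<in> ret_rel S r k"
  using permG_pw pw_pres by blast

end

lemma card_union_classes: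
  assumes eq: "equiv A E" and fin: "finite A" and CA: "C \<subseteq> A"
    and cl: "\<And>y. y \<in> C \<Longrightarrow> E``{y} \<subseteq> C" and cd: "\<And>y. y \<in> C \<Longrightarrow> card (E``{y}) = m"
  shows "card C = m * card ((\<lambda>y. E``{y}) ` C)"
proof -
  have U: "C = \<Union>((\<lambda>y. E``{y}) ` C)"
  proof
    show "C \<subseteq> \<Union>((\<lambda>y. E``{y}) ` C)" using eq CA equiv_class_self by fastforce
    show "\<Union>((\<lambda>y. E``{y}) ` C) \<subseteq> C" using cl by blast
  qed
  have disj: "pairwise disjnt ((\<lambda>y. E``{y}) ` C)"
  proof (rule pairwiseI)
    fix U1 U2 assume X: "U1 \<in> (\<lambda>y. E``{y}) ` C" and Y: "U2 \<in> (\<lambda>y. E``{y}) ` C" and ne: "U1 \<noteq> U2"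
    obtain a b where ab: "a \<in> C" "b \<in> C" "U1 = E``{a}" "U2 = E``{b}" using X Y by blast
    show "disjnt U1 U2"
    proof (rule ccontr)
      assume "\<not> disjnt U1 U2"
      then obtain z where "(a,z) \<in> E" "(b,z) \<in> E" using ab unfolding disjnt_def by blast
      then have "(a,b) \<in> E" using eq unfolding equiv_def sym_def trans_def by blast
      then have "E``{a} = E``{b}" using equiv_class_eq[OF eq] by blast
      then show False using ne ab by simp
    qed
  qed
  have finX: "\<And>U. U \<in> (\<lambda>y. E``{y}) ` C \<Longrightarrow> finite U"
    using fin eq CA by (auto intro: finite_subset[of _ A] simp: equiv_def refl_on_def)
  have "card C = sum card ((\<lambda>y. E``{y}) ` C)"
    using card_Union_disjoint[OF disj finX] U by simp
  also have "\<dots> = sum (\<lambda>_. m) ((\<lambda>y. E``{y}) ` C)"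
    by (rule sum.cong) (auto simp: cd)
  also have "\<dots> = m * card ((\<lambda>y. E``{y}) ` C)" by simp
  finally show ?thesis .
qed

context
  fixes S :: "'a set" and r
  assumes sol: "solution S r" and finS: "finite S" and ind: "indecomposable S r"
begin

abbreviation "RR k \<equiv> ret_rel S r k"
definition "x0 = (SOME x. x \<in> S)"
definition "mm k = card (RR k``{x0})"
definition "cc k = card (S // RR k)"

lemma Sne: "S \<noteq> {}" using sol unfolding solution_def by (rule conjunct1)
lemma x0S: "x0 \<in> S" unfolding x0_def using Sne by (simp add: some_in_eq)

lemma R_equiv: "equiv S (RR k)"
proof (rule equivI)
  show "RR k \<subseteq> S \<times> S" by (rule R_sub[OF sol finS])
  show "refl_on S (RR k)" using R_sub[OF sol finS] R_refl[OF sol finS] by (auto simp: refl_on_def)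
  show "sym (RR k)" using R_sym[OF sol finS] by (auto intro: symI)
  show "trans (RR k)" using R_trans[OF sol finS] by (auto intro: transI)
qed

lemma class_le: assumes g: "g \<in> permG S r" and x: "x \<in> S"
  shows "card (RR k``{x}) \<le> card (RR k``{g x})"
proof (rule card_inj_on_le)
  have sub: "RR k``{x} \<subseteq> S" "RR k``{g x} \<subseteq> S" using R_sub[OF sol finS] by blast+
  show "inj_on g (RR k``{x})"
    by (rule inj_on_subset[OF Bij_inj[OF permG_carrier[OF sol finS g]] sub(1)])
  show "g ` (RR k``{x}) \<subseteq> RR k``{g x}"
  proof
    fix z assume "z \<in> g ` (RR k``{x})"
    then obtain y where y: "(x,y) \<in> RR k" "z = g y" by blast
    then have "(g x, g y) \<in> RR k" using permG_pres[OF sol finS g] by blast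
    then show "z \<in> RR k``{g x}" using y by simp
  qed
  show "finite (RR k``{g x})" by (rule finite_subset[OF sub(2) finS])
qed

lemma class_card: "x \<in> S \<Longrightarrow> card (RR k``{x}) = mm k"
proof -
  assume x: "x \<in> S"
  obtain g where g: "g \<in> permG S r" "g x0 = x" using ind x x0S unfolding indecomposable_def by blast
  obtain h where h: "h \<in> permG S r" "h x = x0" using ind x x0S unfolding indecomposable_def by blast
  show ?thesis using class_le[OF g(1) x0S, of k] class_le[OF h(1) x, of k] g h
    unfolding mm_def by simp
qed

lemma class_sub: "RR k``{x} \<subseteq> S" using R_sub[OF sol finS] by blast
lemma class_fin: "finite (RR k``{x})" by (rule finite_subset[OF class_sub finS])

lemma quot_eq: "S // RR k = (\<lambda>y. RR k``{y}) ` S"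
  unfolding quotient_def by blast

lemma N_eq: "card S = mm k * cc k"
  unfolding cc_def quot_eq
  by (rule card_union_classes[OF R_equiv finS]) (use R_sub[OF sol finS] class_card in auto)

lemma m_pos: "mm k > 0"
proof -
  have "x0 \<in> RR k``{x0}" using R_refl[OF sol finS] x0S by blast
  moreover have "finite (RR k``{x0})" by (rule class_fin)
  ultimately show ?thesis unfolding mm_def by (simp add: card_gt_0_iff) blast
qed

lemma c_pos: "cc k > 0"
  unfolding cc_def quot_eq using Sne finS by (simp add: card_gt_0_iff)

lemma m_dvd: "mm k dvd mm (Suc k)"
proof -
  let ?C = "RR (Suc k)``{x0}"
  have "card ?C = mm k * card ((\<lambda>y. RR k``{y}) ` ?C)"
  proof (rule card_union_classes[OF R_equiv finS])
    show "?C \<subseteq> S" using R_sub[OF sol finS] by blast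
    show "\<And>y. y \<in> ?C \<Longrightarrow> RR k``{y} \<subseteq> ?C"
      using R_mono[OF sol finS] R_trans[OF sol finS] by blast
    show "\<And>y. y \<in> ?C \<Longrightarrow> card (RR k``{y}) = mm k"
      using class_card R_sub[OF sol finS] by blast
  qed
  then show ?thesis unfolding mm_def by simp
qed

lemma c_dvd: "cc (Suc k) dvd cc k"
proof -
  obtain j where j: "mm (Suc k) = mm k * j" using m_dvd by blast
  have "mm k * cc k = mm k * (j * cc (Suc k))" using N_eq[of k] N_eq[of "Suc k"] j by (metis mult.assoc)
  then have "cc k = j * cc (Suc k)" using m_pos[of k] by simp
  then show ?thesis by simp
qed

lemma c_le: "cc (Suc k) \<le> cc k"
  by (rule dvd_imp_le[OF c_dvd c_pos])

lemma c_anti: "i \<le> j \<Longrightarrow> cc j \<le> cc i"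
proof (induction j rule: dec_induct)
  case base then show ?case by simp
next
  case (step j) then show ?case using c_le[of j] by linarith
qed

lemma stable: assumes "cc (Suc k) = cc k" shows "RR (Suc k) = RR k"
proof -
  have "mm (Suc k) * cc k = mm k * cc k" by (metis N_eq assms)
  then have mEq: "mm (Suc k) = mm k" using c_pos[of k] mult_right_cancel by (metis less_not_refl2)
  have "RR k``{x} = RR (Suc k)``{x}" if x: "x \<in> S" for x
  proof (rule card_subset_eq)
    show "finite (RR (Suc k)``{x})" by (rule class_fin)
    show "RR k``{x} \<subseteq> RR (Suc k)``{x}" using R_mono[OF sol finS] by blast
    show "card (RR k``{x}) = card (RR (Suc k)``{x})"
      using class_card[OF x, of k] class_card[OF x, of "Suc k"] mEq by (simp only:)
  qed
  note cl = this
  show ?thesis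
  proof (intro subset_antisym subsetI)
    fix q assume q: "q \<in> RR (Suc k)"
    obtain a b where ab: "q = (a,b)" by (cases q)
    have a: "a \<in> S" using q ab R_sub[OF sol finS] by blast
    have "b \<in> RR (Suc k)``{a}" using q ab by simp
    then have "b \<in> RR k``{a}" using cl[OF a] by simp
    then show "q \<in> RR k" using ab by simp
  next
    fix q assume "q \<in> RR k"
    then show "q \<in> RR (Suc k)" using R_mono[OF sol finS] by (cases q) simp
  qed
qed

lemma stable_all: assumes "RR (Suc k) = RR k" shows "RR (k + j) = RR k"
proof (induction j)
  case 0 then show ?case by simp
next
  case (Suc j)
  have "RR (Suc (k + j)) = RR (Suc k)" unfolding ret_rel.simps(2) Suc by simp
  then show ?case using assms by simp
qed

lemma c1_all: assumes "cc k = 1" "x \<in> S" "y \<in> S" shows "(x, y) \<in> RR k"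
proof -
  obtain C where C: "S // RR k = {C}" using assms(1) unfolding cc_def by (meson card_1_singletonE)
  have "RR k``{x} \<in> S // RR k" "RR k``{y} \<in> S // RR k" using assms(2,3) by (simp_all add: quotientI)
  then have "RR k``{x} = C" "RR k``{y} = C" using C by simp_all
  then have "y \<in> RR k``{x}" using R_refl[OF sol finS] assms(3) by blast
  then show ?thesis by blast
qed

lemma strict: assumes mp: "multipermutation S r" and ne: "cc k \<noteq> 1"
  shows "cc (Suc k) \<noteq> cc k"
proof
  assume eq: "cc (Suc k) = cc k"
  then have st: "RR (k + j) = RR k" for j using stable stable_all by blast
  obtain K where K: "K \<ge> 1" "cc K = 1" using mp unfolding multipermutation_def cc_def by blast
  show False
  proof (cases "k \<le> K")
    case True
    then have "RR K = RR k" using st[of "K - k"] by simp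
    then show False using K ne unfolding cc_def by simp
  next
    case False
    then have "cc k \<le> cc K" using c_anti by simp
    then show False using K ne c_pos[of k] by simp
  qed
qed

lemma c0: "cc 0 = card S"
proof -
  have "(\<lambda>y. RR 0``{y}) ` S = (\<lambda>y. {y}) ` S" by (rule image_cong) auto
  then have "S // RR 0 = (\<lambda>y. {y}) ` S" unfolding quot_eq by simp
  then show ?thesis unfolding cc_def by (simp add: card_image)
qed

lemma part1:
  fixes n :: nat and p :: "nat \<Rightarrow> nat"
  assumes mp: "multipermutation S r"
    and pr: "\<forall>i\<in>{1..n}. Factorial_Ring.prime (p i)" and inj: "inj_on p {1..n}"
    and N: "card S = (\<Prod>i=1..n. p i)"
  shows "cc n = 1"
proof -
  have cdN: "cc k dvd (\<Prod>i=1..n. p i)" for k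
  proof -
    have "cc k dvd card S" using N_eq[of k] by (metis dvd_triv_right)
    then show ?thesis using N by simp
  qed
  have Q: "k \<le> n \<Longrightarrow> cc k = 1 \<or> card {i\<in>{1..n}. p i dvd cc k} + k \<le> n" for k
  proof (induction k)
    case 0
    have "card {i\<in>{1..n}. p i dvd cc 0} \<le> card {1..n}" by (intro card_mono) auto
    then show ?case by simp
  next
    case (Suc k)
    show ?case
    proof (cases "cc k = 1")
      case True then show ?thesis using c_dvd[of k] by simp
    next
      case False
      then have "card {i\<in>{1..n}. p i dvd cc k} + k \<le> n" using Suc by simp
      moreover have "card {i\<in>{1..n}. p i dvd cc (Suc k)} < card {i\<in>{1..n}. p i dvd cc k}"
        using prime_step[OF pr inj cdN c_dvd strict[OF mp False]] .
      ultimately show ?thesis by simp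
    qed
  qed
  show ?thesis
  proof (rule ccontr)
    assume ne: "cc n \<noteq> 1"
    then have "card {i\<in>{1..n}. p i dvd cc n} = 0" using Q[of n] by simp
    then have "{i\<in>{1..n}. p i dvd cc n} = {}" by simp
    then show False using prime_end[OF pr cdN ne] by blast
  qed
qed

end

lemma (in comm_group) lam_add_aux:
  assumes "n \<in> carrier G" "x \<in> carrier G" "y \<in> carrier G" "z \<in> carrier G" "g \<in> carrier G"
    "z \<otimes> g = x \<otimes> y" "n = inv g"
  shows "(n \<otimes> x) \<otimes> (n \<otimes> y) = n \<otimes> z"
proof -
  have "(n \<otimes> x) \<otimes> (n \<otimes> y) = n \<otimes> (n \<otimes> (x \<otimes> y))" using assms(1-5) by (simp add: m_ac)
  also have "\<dots> = n \<otimes> (n \<otimes> (z \<otimes> g))" by (simp only: assms(6))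
  also have "\<dots> = (n \<otimes> z) \<otimes> (n \<otimes> g)" using assms(1-5) by (simp add: m_ac)
  also have "\<dots> = n \<otimes> z" using assms(1,4,5,7) by simp
  finally show ?thesis .
qed

context
  fixes S :: "'a set" and r and pl
  assumes sol: "solution S r" and finS: "finite S" and br: "induced_brace_add S r pl"
begin

abbreviation "BB \<equiv> permG S r"
abbreviation "AA \<equiv> addG (permG S r) pl"
abbreviation "BG \<equiv> BijGroup S"

lemma LB: "left_brace BB pl (monoid.mult BG)"
  using br unfolding induced_brace_add_def by (rule conjunct1)
lemma AA_cg: "comm_group AA" using LB unfolding left_brace_def by (rule conjunct1)
lemma AA_carrier [simp]: "carrier AA = BB" by (simp add: addG_def)
lemma pl_eq: "pl x y = x \<otimes>\<^bsub>AA\<^esub> y" by (simp add: addG_def)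

lemma AA_group: "group AA"
proof -
  interpret A: comm_group AA by (rule AA_cg)
  show ?thesis by (rule A.is_group)
qed
lemma neg_closed: "g \<in> BB \<Longrightarrow> inv\<^bsub>AA\<^esub> g \<in> BB"
  using group.inv_closed[OF AA_group, of g] by simp
lemma add_closed: "a \<in> BB \<Longrightarrow> b \<in> BB \<Longrightarrow> a \<otimes>\<^bsub>AA\<^esub> b \<in> BB"
  using monoid.m_closed[OF group.is_monoid[OF AA_group], of a b] by simp
lemma add_assoc: "a \<in> BB \<Longrightarrow> b \<in> BB \<Longrightarrow> c \<in> BB \<Longrightarrow>
   (a \<otimes>\<^bsub>AA\<^esub> b) \<otimes>\<^bsub>AA\<^esub> c = a \<otimes>\<^bsub>AA\<^esub> (b \<otimes>\<^bsub>AA\<^esub> c)"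
  using monoid.m_assoc[OF group.is_monoid[OF AA_group], of a b c] by simp
lemma add_rinv: "a \<in> BB \<Longrightarrow> a \<otimes>\<^bsub>AA\<^esub> inv\<^bsub>AA\<^esub> a = \<one>\<^bsub>AA\<^esub>"
  using group.r_inv[OF AA_group, of a] by simp
lemma add_linv: "a \<in> BB \<Longrightarrow> inv\<^bsub>AA\<^esub> a \<otimes>\<^bsub>AA\<^esub> a = \<one>\<^bsub>AA\<^esub>"
  using group.l_inv[OF AA_group, of a] by simp
lemma add_lone: "a \<in> BB \<Longrightarrow> \<one>\<^bsub>AA\<^esub> \<otimes>\<^bsub>AA\<^esub> a = a"
  using monoid.l_one[OF group.is_monoid[OF AA_group], of a] by simp
lemma add_rone: "a \<in> BB \<Longrightarrow> a \<otimes>\<^bsub>AA\<^esub> \<one>\<^bsub>AA\<^esub> = a"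
  using monoid.r_one[OF group.is_monoid[OF AA_group], of a] by simp
lemma add_comm: "a \<in> BB \<Longrightarrow> b \<in> BB \<Longrightarrow> a \<otimes>\<^bsub>AA\<^esub> b = b \<otimes>\<^bsub>AA\<^esub> a"
  using comm_monoid.m_comm[OF comm_group.axioms(1)[OF AA_cg], of a b] by simp
lemma zero_in: "\<one>\<^bsub>AA\<^esub> \<in> BB"
  using monoid.one_closed[OF group.is_monoid[OF AA_group]] by simp

lemma add_lcancel: "c \<in> BB \<Longrightarrow> a \<in> BB \<Longrightarrow> b \<in> BB \<Longrightarrow> c \<otimes>\<^bsub>AA\<^esub> a = c \<otimes>\<^bsub>AA\<^esub> b \<Longrightarrow> a = b"
  using monoid.Units_l_cancel[OF group.is_monoid[OF AA_group], of c a b] group.Units_eq[OF AA_group] by simp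

lemma dist: "a \<in> BB \<Longrightarrow> b \<in> BB \<Longrightarrow> c \<in> BB \<Longrightarrow>
  (a \<otimes>\<^bsub>BG\<^esub> (b \<otimes>\<^bsub>AA\<^esub> c)) \<otimes>\<^bsub>AA\<^esub> a = (a \<otimes>\<^bsub>BG\<^esub> b) \<otimes>\<^bsub>AA\<^esub> (a \<otimes>\<^bsub>BG\<^esub> c)"
proof -
  assume abc: "a \<in> BB" "b \<in> BB" "c \<in> BB"
  have "\<forall>a\<in>BB. \<forall>b\<in>BB. \<forall>c\<in>BB. pl (a \<otimes>\<^bsub>BG\<^esub> (pl b c)) a = pl (a \<otimes>\<^bsub>BG\<^esub> b) (a \<otimes>\<^bsub>BG\<^esub> c)"
    using LB unfolding left_brace_def by (elim conjE)
  then have "pl (a \<otimes>\<^bsub>BG\<^esub> (pl b c)) a = pl (a \<otimes>\<^bsub>BG\<^esub> b) (a \<otimes>\<^bsub>BG\<^esub> c)"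
    using abc by blast
  then show ?thesis by (simp only: pl_eq)
qed

lemma hypH: "g \<in> BB \<Longrightarrow> y \<in> S \<Longrightarrow>
  (inv\<^bsub>AA\<^esub> g) \<otimes>\<^bsub>AA\<^esub> (g \<otimes>\<^bsub>BG\<^esub> restrict (sig r y) S) = restrict (sig r (g y)) S"
proof -
  assume gy: "g \<in> BB" "y \<in> S"
  have "\<forall>g\<in>BB. \<forall>y\<in>S. blam BB pl (monoid.mult BG) g (restrict (sig r y) S) = restrict (sig r (g y)) S"
    using br unfolding induced_brace_add_def by (rule conjunct2)
  then have "blam BB pl (monoid.mult BG) g (restrict (sig r y) S) = restrict (sig r (g y)) S"
    using gy by blast
  then show ?thesis unfolding blam_def by (simp only: pl_eq)
qed

lemma gens_sub: "{restrict (sig r x) S | x. x \<in> S} \<subseteq> carrier BG"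
  using sgr_Bij[OF sol finS] by blast

lemma B_one: "\<one>\<^bsub>BG\<^esub> \<in> BB" unfolding permG_def by (rule generate.one)
lemma B_mult: "g \<in> BB \<Longrightarrow> h \<in> BB \<Longrightarrow> g \<otimes>\<^bsub>BG\<^esub> h \<in> BB" unfolding permG_def by (rule generate.eng)
lemma B_inv: "g \<in> BB \<Longrightarrow> inv\<^bsub>BG\<^esub> g \<in> BB"
  unfolding permG_def by (rule group.generate_m_inv_closed[OF group_BijGroup gens_sub])
lemma B_sig: "y \<in> S \<Longrightarrow> restrict (sig r y) S \<in> BB"
  unfolding permG_def by (rule generate.incl) blast
lemma B_car: "g \<in> BB \<Longrightarrow> g \<in> carrier BG" by (rule permG_carrier[OF sol finS])

lemma zero_eq: "\<one>\<^bsub>AA\<^esub> = \<one>\<^bsub>BG\<^esub>"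
proof -
  let ?z = "\<one>\<^bsub>AA\<^esub>"
  have zB: "?z \<in> BB" by (rule zero_in)
  have "a = a \<otimes>\<^bsub>BG\<^esub> ?z" if a: "a \<in> BB" for a
  proof -
    have azB: "a \<otimes>\<^bsub>BG\<^esub> ?z \<in> BB" using B_mult a zB by blast
    have "(a \<otimes>\<^bsub>BG\<^esub> ?z) \<otimes>\<^bsub>AA\<^esub> a = (a \<otimes>\<^bsub>BG\<^esub> ?z) \<otimes>\<^bsub>AA\<^esub> (a \<otimes>\<^bsub>BG\<^esub> ?z)"
      using dist[OF a zB zB] by (simp only: add_lone[OF zB])
    then show ?thesis by (rule add_lcancel[OF azB a azB])
  qed
  from this[OF B_one] show ?thesis
    using monoid.l_one[OF BG_monoid B_car[OF zB]] by simp
qed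

lemma H: "g \<in> BB \<Longrightarrow> y \<in> S \<Longrightarrow>
  g \<otimes>\<^bsub>BG\<^esub> restrict (sig r y) S = g \<otimes>\<^bsub>AA\<^esub> restrict (sig r (g y)) S"
proof -
  assume g: "g \<in> BB" and y: "y \<in> S"
  have c: "g \<otimes>\<^bsub>BG\<^esub> restrict (sig r y) S \<in> BB" using B_mult g B_sig y by blast
  have "g \<otimes>\<^bsub>AA\<^esub> restrict (sig r (g y)) S = g \<otimes>\<^bsub>AA\<^esub> ((inv\<^bsub>AA\<^esub> g) \<otimes>\<^bsub>AA\<^esub> (g \<otimes>\<^bsub>BG\<^esub> restrict (sig r y) S))"
    using hypH g y by simp
  also have "\<dots> = (g \<otimes>\<^bsub>AA\<^esub> inv\<^bsub>AA\<^esub> g) \<otimes>\<^bsub>AA\<^esub> (g \<otimes>\<^bsub>BG\<^esub> restrict (sig r y) S)"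
    by (simp only: add_assoc[OF g neg_closed[OF g] c])
  also have "\<dots> = g \<otimes>\<^bsub>BG\<^esub> restrict (sig r y) S"
    by (simp only: add_rinv[OF g] add_lone[OF c])
  finally show ?thesis by simp
qed

lemma lam_eq: "blam BB pl (monoid.mult BG) g c = (inv\<^bsub>AA\<^esub> g) \<otimes>\<^bsub>AA\<^esub> (g \<otimes>\<^bsub>BG\<^esub> c)"
  unfolding blam_def by (rule pl_eq)

lemma lam_closed: "g \<in> BB \<Longrightarrow> c \<in> BB \<Longrightarrow> blam BB pl (monoid.mult BG) g c \<in> BB"
proof -
  assume gc: "g \<in> BB" "c \<in> BB"
  show ?thesis unfolding lam_eq by (rule add_closed[OF neg_closed[OF gc(1)] B_mult[OF gc]])
qed

lemma lam_add: assumes g: "g \<in> BB" and a: "a \<in> BB" and b: "b \<in> BB"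
  shows "blam BB pl (monoid.mult BG) g (a \<otimes>\<^bsub>AA\<^esub> b)
    = blam BB pl (monoid.mult BG) g a \<otimes>\<^bsub>AA\<^esub> blam BB pl (monoid.mult BG) g b"
proof -
  define n where "n = inv\<^bsub>AA\<^esub> g"
  define x where "x = g \<otimes>\<^bsub>BG\<^esub> a"
  define y where "y = g \<otimes>\<^bsub>BG\<^esub> b"
  define z where "z = g \<otimes>\<^bsub>BG\<^esub> (a \<otimes>\<^bsub>AA\<^esub> b)"
  have nB: "n \<in> BB" using g n_def neg_closed by simp
  have xB: "x \<in> BB" "y \<in> BB" "z \<in> BB" using B_mult add_closed g a b x_def y_def z_def by simp_all
  have D: "z \<otimes>\<^bsub>AA\<^esub> g = x \<otimes>\<^bsub>AA\<^esub> y" using dist[OF g a b] x_def y_def z_def by simp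
  have "(n \<otimes>\<^bsub>AA\<^esub> x) \<otimes>\<^bsub>AA\<^esub> (n \<otimes>\<^bsub>AA\<^esub> y) = n \<otimes>\<^bsub>AA\<^esub> z"
    using comm_group.lam_add_aux[OF AA_cg, of n x y z g] nB xB g D n_def by simp
  then show ?thesis unfolding lam_eq n_def x_def y_def z_def by simp
qed

lemma lam_one: "g \<in> BB \<Longrightarrow> blam BB pl (monoid.mult BG) g \<one>\<^bsub>BG\<^esub> = \<one>\<^bsub>BG\<^esub>"
proof -
  assume g: "g \<in> BB"
  have "g \<otimes>\<^bsub>BG\<^esub> \<one>\<^bsub>BG\<^esub> = g" using monoid.r_one[OF BG_monoid B_car[OF g]] .
  then show ?thesis unfolding lam_eq using g zero_eq add_linv by simp
qed

end

context
  fixes S :: "'a set" and r and pl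
  assumes sol: "solution S r" and finS: "finite S" and br: "induced_brace_add S r pl"
begin

abbreviation "B2 \<equiv> permG S r"
abbreviation "G2 \<equiv> BijGroup S"
abbreviation "A2 \<equiv> addG (permG S r) pl"
abbreviation "rB \<equiv> brace_sol (permG S r) pl (monoid.mult (BijGroup S))"

definition "TT k = {(g,h). g \<in> B2 \<and> h \<in> B2 \<and> (\<forall>y\<in>S. (g y, h y) \<in> ret_rel S r k)}"

lemma inv_eval: assumes g: "g \<in> B2" and u: "u \<in> S"
  shows "(inv\<^bsub>G2\<^esub> g) (g u) = u" "g ((inv\<^bsub>G2\<^esub> g) u) = u"
proof -
  have gc: "g \<in> carrier G2" using B_car[OF sol finS br g] .
  have ic: "inv\<^bsub>G2\<^esub> g \<in> carrier G2" using group.inv_closed[OF group_BijGroup gc] .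
  have "(inv\<^bsub>G2\<^esub> g \<otimes>\<^bsub>G2\<^esub> g) u = u" using group.l_inv[OF group_BijGroup gc] one_eval u by simp
  then show "(inv\<^bsub>G2\<^esub> g) (g u) = u" using mult_eval[OF ic gc u] by simp
  have "(g \<otimes>\<^bsub>G2\<^esub> inv\<^bsub>G2\<^esub> g) u = u" using group.r_inv[OF group_BijGroup gc] one_eval u by simp
  then show "g ((inv\<^bsub>G2\<^esub> g) u) = u" using mult_eval[OF gc ic u] by simp
qed

lemma B_in: "g \<in> B2 \<Longrightarrow> u \<in> S \<Longrightarrow> g u \<in> S"
  by (rule Bij_in[OF B_car[OF sol finS br]])

lemma T_inv: assumes gh: "(g,h) \<in> TT k"
  shows "(inv\<^bsub>G2\<^esub> g, inv\<^bsub>G2\<^esub> h) \<in> TT k"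
proof -
  have g: "g \<in> B2" and h: "h \<in> B2" and T: "\<And>y. y \<in> S \<Longrightarrow> (g y, h y) \<in> ret_rel S r k"
    using gh unfolding TT_def by auto
  have ig: "inv\<^bsub>G2\<^esub> g \<in> B2" and ih: "inv\<^bsub>G2\<^esub> h \<in> B2" using B_inv[OF sol finS br] g h by auto
  have "((inv\<^bsub>G2\<^esub> g) y, (inv\<^bsub>G2\<^esub> h) y) \<in> ret_rel S r k" if y: "y \<in> S" for y
  proof -
    define u where "u = (inv\<^bsub>G2\<^esub> h) y"
    have uS: "u \<in> S" using u_def B_in[OF ih y] by simp
    have hu: "h u = y" using inv_eval(2)[OF h y] u_def by simp
    have "(g u, h u) \<in> ret_rel S r k" using T uS by blast
    then have "((inv\<^bsub>G2\<^esub> g) (g u), (inv\<^bsub>G2\<^esub> g) (h u)) \<in> ret_rel S r k"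
      using permG_pres[OF sol finS ig] by blast
    then have "(u, (inv\<^bsub>G2\<^esub> g) y) \<in> ret_rel S r k" using inv_eval(1)[OF g uS] hu by simp
    then show ?thesis using R_sym[OF sol finS] u_def by blast
  qed
  then show ?thesis unfolding TT_def using ig ih by blast
qed

lemma mult_sig_eval: "g \<in> B2 \<Longrightarrow> a \<in> S \<Longrightarrow> y \<in> S \<Longrightarrow>
   (g \<otimes>\<^bsub>G2\<^esub> restrict (sig r a) S) y = g (sig r a y)"
  using mult_eval[OF B_car[OF sol finS br] sgr_Bij[OF sol finS]] by simp

lemma L: assumes gh: "(g,h) \<in> TT k" and w: "w \<in> S" "w' \<in> S"
  and ww: "(w, w') \<in> ret_rel S r (Suc k)"
  shows "(g \<otimes>\<^bsub>A2\<^esub> restrict (sig r w) S, h \<otimes>\<^bsub>A2\<^esub> restrict (sig r w') S) \<in> TT k"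
proof -
  have g: "g \<in> B2" and h: "h \<in> B2" and T: "\<And>y. y \<in> S \<Longrightarrow> (g y, h y) \<in> ret_rel S r k"
    using gh unfolding TT_def by auto
  have ig: "inv\<^bsub>G2\<^esub> g \<in> B2" and ih: "inv\<^bsub>G2\<^esub> h \<in> B2" using B_inv[OF sol finS br] g h by auto
  define a where "a = (inv\<^bsub>G2\<^esub> g) w"
  define b where "b = (inv\<^bsub>G2\<^esub> h) w'"
  have ab: "a \<in> S" "b \<in> S" using a_def b_def B_in ig ih w by auto
  have ga: "g a = w" "h b = w'" using inv_eval(2) g h w a_def b_def by auto
  have e1: "g \<otimes>\<^bsub>A2\<^esub> restrict (sig r w) S = g \<otimes>\<^bsub>G2\<^esub> restrict (sig r a) S"
    using H[OF sol finS br g ab(1)] ga by simp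
  have e2: "h \<otimes>\<^bsub>A2\<^esub> restrict (sig r w') S = h \<otimes>\<^bsub>G2\<^esub> restrict (sig r b) S"
    using H[OF sol finS br h ab(2)] ga by simp
  have "((inv\<^bsub>G2\<^esub> g) w, (inv\<^bsub>G2\<^esub> h) w) \<in> ret_rel S r k"
    using T_inv[OF gh] w unfolding TT_def by blast
  then have s1: "(a, (inv\<^bsub>G2\<^esub> h) w) \<in> ret_rel S r (Suc k)" using a_def R_mono[OF sol finS] by blast
  have s2: "((inv\<^bsub>G2\<^esub> h) w, b) \<in> ret_rel S r (Suc k)"
    using permG_pres[OF sol finS ih ww] b_def by blast
  have abR: "(a, b) \<in> ret_rel S r (Suc k)" using R_trans[OF sol finS s1 s2] .
  have "((g \<otimes>\<^bsub>G2\<^esub> restrict (sig r a) S) y, (h \<otimes>\<^bsub>G2\<^esub> restrict (sig r b) S) y) \<in> ret_rel S r k"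
    if y: "y \<in> S" for y
  proof -
    have "(sig r a y, sig r b y) \<in> ret_rel S r k" using abR y by simp
    then have t1: "(g (sig r a y), g (sig r b y)) \<in> ret_rel S r k" using permG_pres[OF sol finS g] by blast
    have t2: "(g (sig r b y), h (sig r b y)) \<in> ret_rel S r k" using T sg_in[OF sol finS ab(2) y] by blast
    show ?thesis using R_trans[OF sol finS t1 t2] mult_sig_eval g h ab y by simp
  qed
  moreover have "g \<otimes>\<^bsub>G2\<^esub> restrict (sig r a) S \<in> B2" "h \<otimes>\<^bsub>G2\<^esub> restrict (sig r b) S \<in> B2"
    using B_mult[OF sol finS br] B_sig[OF sol finS br] g h ab by auto
  ultimately show ?thesis unfolding TT_def e1 e2 by blast
qed

lemma pw_B: "c \<in> pw S r \<Longrightarrow> c \<in> B2"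
proof (induction rule: pw.induct)
  case pw_one then show ?case by (rule B_one[OF sol finS br])
next
  case (pw_step c v) then show ?case using B_mult[OF sol finS br] B_sig[OF sol finS br] by blast
qed

lemma lamB: "g \<in> B2 \<Longrightarrow> y \<in> S \<Longrightarrow>
   blam B2 pl (monoid.mult G2) g (restrict (sig r y) S) = restrict (sig r (g y)) S"
  using hypH[OF sol finS br] lam_eq[OF sol finS br] by simp

lemma lam_T: assumes gh: "(g,h) \<in> TT (Suc k)" and c: "c \<in> pw S r"
  shows "(blam B2 pl (monoid.mult G2) g c, blam B2 pl (monoid.mult G2) h c) \<in> TT k"
  using c
proof (induction rule: pw.induct)
  case pw_one
  have g: "g \<in> B2" and h: "h \<in> B2" using gh unfolding TT_def by auto
  have "(\<one>\<^bsub>G2\<^esub>, \<one>\<^bsub>G2\<^esub>) \<in> TT k"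
  proof -
    have "\<forall>y\<in>S. (\<one>\<^bsub>G2\<^esub> y, \<one>\<^bsub>G2\<^esub> y) \<in> ret_rel S r k"
      by (simp add: one_eval R_refl[OF sol finS])
    then show ?thesis unfolding TT_def using B_one[OF sol finS br] by blast
  qed
  then show ?case using lam_one[OF sol finS br g] lam_one[OF sol finS br h] by simp
next
  case (pw_step c v)
  have g: "g \<in> B2" and h: "h \<in> B2" and T: "\<And>y. y \<in> S \<Longrightarrow> (g y, h y) \<in> ret_rel S r (Suc k)"
    using gh unfolding TT_def by auto
  have cB: "c \<in> B2" using pw_B pw_step by blast
  have cv: "c v \<in> S" using B_in cB pw_step by blast
  have eq: "c \<otimes>\<^bsub>G2\<^esub> restrict (sig r v) S = c \<otimes>\<^bsub>A2\<^esub> restrict (sig r (c v)) S"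
    using H[OF sol finS br cB pw_step(2)] .
  have sB: "restrict (sig r (c v)) S \<in> B2" using B_sig[OF sol finS br cv] .
  have lg: "blam B2 pl (monoid.mult G2) g (c \<otimes>\<^bsub>A2\<^esub> restrict (sig r (c v)) S)
     = blam B2 pl (monoid.mult G2) g c \<otimes>\<^bsub>A2\<^esub> restrict (sig r (g (c v))) S"
    using lam_add[OF sol finS br g cB sB] lamB[OF g cv] by simp
  have lh: "blam B2 pl (monoid.mult G2) h (c \<otimes>\<^bsub>A2\<^esub> restrict (sig r (c v)) S)
     = blam B2 pl (monoid.mult G2) h c \<otimes>\<^bsub>A2\<^esub> restrict (sig r (h (c v))) S"
    using lam_add[OF sol finS br h cB sB] lamB[OF h cv] by simp
  have "(blam B2 pl (monoid.mult G2) g c \<otimes>\<^bsub>A2\<^esub> restrict (sig r (g (c v))) S,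
         blam B2 pl (monoid.mult G2) h c \<otimes>\<^bsub>A2\<^esub> restrict (sig r (h (c v))) S) \<in> TT k"
    using L[OF pw_step(3) B_in[OF g cv] B_in[OF h cv] T[OF cv]] .
  then show ?case using eq lg lh by simp
qed

lemma sig_rB: "sig rB g c = blam B2 pl (monoid.mult G2) g c"
  unfolding sig_def brace_sol_def by simp

lemma T_RB: "(g,h) \<in> TT k \<Longrightarrow> (g,h) \<in> ret_rel B2 rB k"
proof (induction k arbitrary: g h)
  case 0
  have g: "g \<in> B2" and h: "h \<in> B2" and T: "\<And>y. y \<in> S \<Longrightarrow> (g y, h y) \<in> ret_rel S r 0"
    using 0 unfolding TT_def by auto
  have "g = h"
  proof (rule extensionalityI[OF Bij_ext[OF B_car[OF sol finS br g]] Bij_ext[OF B_car[OF sol finS br h]]])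
    fix y assume "y \<in> S" then show "g y = h y" using T by auto
  qed
  then show ?case using g h by simp
next
  case (Suc k)
  have g: "g \<in> B2" and h: "h \<in> B2" using Suc.prems unfolding TT_def by auto
  have "(sig rB g c, sig rB h c) \<in> ret_rel B2 rB k" if c: "c \<in> B2" for c
  proof -
    have "c \<in> pw S r" using permG_pw[OF sol finS] c by blast
    then have "(blam B2 pl (monoid.mult G2) g c, blam B2 pl (monoid.mult G2) h c) \<in> TT k"
      using lam_T[OF Suc.prems] by blast
    then show ?thesis using Suc.IH sig_rB by simp
  qed
  then show ?case using g h by simp
qed

lemma brace_part:
  assumes all: "\<And>x y. x \<in> S \<Longrightarrow> y \<in> S \<Longrightarrow> (x, y) \<in> ret_rel S r n" and n: "n \<ge> 1"
  shows "card (B2 // ret_rel B2 rB n) = 1"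
proof -
  have "(g, h) \<in> ret_rel B2 rB n" if "g \<in> B2" "h \<in> B2" for g h
    using T_RB that all B_in unfolding TT_def by blast
  moreover have "ret_rel B2 rB n \<subseteq> B2 \<times> B2" by (cases n) auto
  ultimately have eq: "ret_rel B2 rB n = B2 \<times> B2" by blast
  have ne: "B2 \<noteq> {}" using B_one[OF sol finS br] by blast
  have "B2 // ret_rel B2 rB n = {B2}" unfolding eq quotient_def using ne by auto
  then show ?thesis by simp
qed

end

theorem corollary4p2:
  fixes S :: "'a set" and r :: "'a \<times> 'a \<Rightarrow> 'a \<times> 'a"
    and n :: nat and p :: "nat \<Rightarrow> nat"
  assumes "n \<ge> 1"
    and "\<forall>i\<in>{1..n}. Factorial_Ring.prime (p i)"
    and "inj_on p {1..n}"
    and "solution S r"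
    and "indecomposable S r"
    and "multipermutation S r"
    and "card S = (\<Prod>i=1..n. p i)"
  shows "mp_level S r \<le> n \<and>
    (\<forall>pl. induced_brace_add S r pl \<longrightarrow>
       multipermutation (permG S r) (brace_sol (permG S r) pl (monoid.mult (BijGroup S))) \<and>
       mp_level (permG S r) (brace_sol (permG S r) pl (monoid.mult (BijGroup S))) \<le> n)"
proof -
  note n1 = assms(1) and pr = assms(2) and inj = assms(3) and sol = assms(4)
    and ind = assms(5) and mp = assms(6) and N = assms(7)
  have "(\<Prod>i=1..n. p i) > 0" using pr prime_gt_0_nat by (intro prod_pos) blast
  then have finS: "finite S"
  proof -
    assume pos: "(\<Prod>i=1..n. p i) > 0"
    show "finite S"
    proof (rule ccontr)
      assume "infinite S"
      then have "card S = 0" by simp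
      then have "(\<Prod>i=1..n. p i) = 0" using N by simp
      then show False using pos by linarith
    qed
  qed
  have c1: "cc S r n = 1" by (rule part1[OF sol finS ind mp pr inj N])
  have all: "\<And>x y. x \<in> S \<Longrightarrow> y \<in> S \<Longrightarrow> (x, y) \<in> ret_rel S r n"
    using c1_all[OF sol finS ind c1] by blast
  have "mp_level S r \<le> n" unfolding mp_level_def
  proof (rule Least_le[of _ n])
    show "n \<ge> 1 \<and> card (S // ret_rel S r n) = 1" using n1 c1 by (simp add: cc_def[OF sol finS ind])
  qed
  moreover have "multipermutation (permG S r) (brace_sol (permG S r) pl (monoid.mult (BijGroup S))) \<and>
       mp_level (permG S r) (brace_sol (permG S r) pl (monoid.mult (BijGroup S))) \<le> n"
    if br: "induced_brace_add S r pl" for pl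
  proof -
    have c: "card (permG S r // ret_rel (permG S r) (brace_sol (permG S r) pl (monoid.mult (BijGroup S))) n) = 1"
      by (rule brace_part[OF sol finS br all n1])
    let ?R = "ret_rel (permG S r) (brace_sol (permG S r) pl (monoid.mult (BijGroup S)))"
    have m: "n \<ge> 1 \<and> card (permG S r // ?R n) = 1" using n1 c by blast
    have "multipermutation (permG S r) (brace_sol (permG S r) pl (monoid.mult (BijGroup S)))"
      unfolding multipermutation_def using m by blast
    moreover have "mp_level (permG S r) (brace_sol (permG S r) pl (monoid.mult (BijGroup S))) \<le> n"
      unfolding mp_level_def by (rule Least_le[of _ n]) (rule m)
    ultimately show ?thesis by blast
  qed
  ultimately show ?thesis by blast
qed

end
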